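(* Let $\mathfrak g$ be a right Leibniz algebra with bracket $[\,,]$ and let $R$ be a left Leibniz dual algebra with product $(r,s)\mapsto rs$, over a common field. Then the tensor product $\mathfrak g\otimes R$ with multiplication $(x\otimes r)\circ(y\otimes s)=[x,y]\otimes rs$ is a right-symmetric algebra.
   Context: A right Leibniz algebra satisfies $[a,[b,c]]-[[a,b],c]+[[a,c],b]=0$. A left Leibniz dual algebra satisfies $(rs)t=r(st+ts)$. An algebra is right-symmetric if $X\circ(Y\circ Z)-(X\circ Y)\circ Z=X\circ(Z\circ Y)-(X\circ Z)\circ Y$ for all $X,Y,Z$. *)

theory Defs
  imports Complex_Main
begin

definition bilinear_map ::
  "('k::field \<Rightarrow> 'a::ab_group_add \<Rightarrow> 'a) \<Rightarrow> ('k \<Rightarrow> 'b::ab_group_add \<Rightarrow> 'b)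
   \<Rightarrow> ('k \<Rightarrow> 'c::ab_group_add \<Rightarrow> 'c) \<Rightarrow> ('a \<Rightarrow> 'b \<Rightarrow> 'c) \<Rightarrow> bool" where
  "bilinear_map sa sb sc f \<longleftrightarrow>
     (\<forall>y. Vector_Spaces.linear sa sc (\<lambda>x. f x y)) \<and>
     (\<forall>x. Vector_Spaces.linear sb sc (\<lambda>y. f x y))"

definition right_leibniz_algebra ::
  "('k::field \<Rightarrow> 'g::ab_group_add \<Rightarrow> 'g) \<Rightarrow> ('g \<Rightarrow> 'g \<Rightarrow> 'g) \<Rightarrow> bool" where
  "right_leibniz_algebra sg br \<longleftrightarrow> vector_space sg \<and> bilinear_map sg sg sg br \<and>
     (\<forall>a b c. br a (br b c) - br (br a b) c + br (br a c) b = 0)"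

definition left_leibniz_dual_algebra ::
  "('k::field \<Rightarrow> 'r::ab_group_add \<Rightarrow> 'r) \<Rightarrow> ('r \<Rightarrow> 'r \<Rightarrow> 'r) \<Rightarrow> bool" where
  "left_leibniz_dual_algebra sr m \<longleftrightarrow> vector_space sr \<and> bilinear_map sr sr sr m \<and>
     (\<forall>r s t. m (m r s) t = m r (m s t + m t s))"

definition right_symmetric :: "('t \<Rightarrow> 't \<Rightarrow> 't::ab_group_add) \<Rightarrow> bool" where
  "right_symmetric p \<longleftrightarrow>
     (\<forall>X Y Z. p X (p Y Z) - p (p X Y) Z = p X (p Z Y) - p (p X Z) Y)"

text \<open>(T, tp) is a tensor product of the vector spaces G and R over 'k: tp is bilinear,
its image spans T, and every bilinear form on G x R factors uniquely through a linear
functional on T. (For vector spaces over a field, the universal property with respect to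
scalar-valued bilinear maps is equivalent to the full universal property.)\<close>
definition is_tensor_product ::
  "('k::field \<Rightarrow> 'g::ab_group_add \<Rightarrow> 'g) \<Rightarrow> ('k \<Rightarrow> 'r::ab_group_add \<Rightarrow> 'r)
   \<Rightarrow> ('k \<Rightarrow> 't::ab_group_add \<Rightarrow> 't) \<Rightarrow> ('g \<Rightarrow> 'r \<Rightarrow> 't) \<Rightarrow> bool" where
  "is_tensor_product sg sr st tp \<longleftrightarrow>
     vector_space sg \<and> vector_space sr \<and> vector_space st \<and>
     bilinear_map sg sr st tp \<and>
     module.span st (range (\<lambda>(x, y). tp x y)) = UNIV \<and>
     (\<forall>f :: 'g \<Rightarrow> 'r \<Rightarrow> 'k. bilinear_map sg sr (*) f \<longrightarrow>
        (\<exists>!h. Vector_Spaces.linear st (*) h \<and> (\<forall>x y. h (tp x y) = f x y)))"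

end

theory Submission
  imports Defs
begin

lemma kill_span:
  assumes "module_hom st st f" "module.span st S = UNIV" "\<forall>x\<in>S. f x = 0"
  shows "f v = 0"
  using module_hom.eq_0_on_span[OF assms(1), of S v] assms by auto

lemma aux_ab:
  fixes A Bu Bv Cv Du Dv :: "'a::ab_group_add"
  assumes "A - Bu + Du = 0" "Cv - Dv + Bv = 0"
  shows "(A - (Bu + Bv)) - (Cv - (Dv + Du)) = 0"
proof -
  have "(A - (Bu + Bv)) - (Cv - (Dv + Du)) = (A - Bu + Du) - (Cv - Dv + Bv)"
    by (simp add: algebra_simps)
  then show ?thesis using assms by simp
qed

theorem mainTheorem17:
  fixes sg :: "'k::field \<Rightarrow> 'g::ab_group_add \<Rightarrow> 'g"
    and sr :: "'k \<Rightarrow> 'r::ab_group_add \<Rightarrow> 'r"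
    and st :: "'k \<Rightarrow> 't::ab_group_add \<Rightarrow> 't"
    and br :: "'g \<Rightarrow> 'g \<Rightarrow> 'g"
    and m :: "'r \<Rightarrow> 'r \<Rightarrow> 'r"
    and tp :: "'g \<Rightarrow> 'r \<Rightarrow> 't"
    and circ :: "'t \<Rightarrow> 't \<Rightarrow> 't"
  assumes "right_leibniz_algebra sg br"
    and "left_leibniz_dual_algebra sr m"
    and "is_tensor_product sg sr st tp"
    and "bilinear_map st st st circ"
    and "\<forall>x r y s. circ (tp x r) (tp y s) = tp (br x y) (m r s)"
  shows "right_symmetric circ"
proof -
  have leib: "\<And>a b c. br a (br b c) - br (br a b) c + br (br a c) b = 0"
    using assms(1) unfolding right_leibniz_algebra_def by blast
  have dual: "\<And>r s t. m (m r s) t = m r (m s t + m t s)"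
    using assms(2) unfolding left_leibniz_dual_algebra_def by blast
  have mlin: "\<And>r. module_hom sr sr (m r)"
    using assms(2) unfolding left_leibniz_dual_algebra_def bilinear_map_def
    by (simp add: module_hom_iff_linear)
  have tpl: "\<And>y. module_hom sg st (\<lambda>x. tp x y)"
    and tpr: "\<And>x. module_hom sr st (tp x)"
    using assms(3) unfolding is_tensor_product_def bilinear_map_def
    by (simp_all add: module_hom_iff_linear)
  have span: "module.span st (range (\<lambda>(x, y). tp x y)) = UNIV"
    using assms(3) unfolding is_tensor_product_def by blast
  have cl: "\<And>B. module_hom st st (\<lambda>X. circ X B)"
    and cr: "\<And>A. module_hom st st (circ A)"
    using assms(4) unfolding bilinear_map_def
    by (simp_all add: module_hom_iff_linear)
  have mod: "module st" using cl[of 0] unfolding module_hom_iff by blast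
  have addL: "\<And>X X' B. circ (X + X') B = circ X B + circ X' B"
    and scL: "\<And>c X B. circ (st c X) B = st c (circ X B)"
    using cl unfolding module_hom_iff by blast+
  have addR: "\<And>X X' B. circ B (X + X') = circ B X + circ B X'"
    and scR: "\<And>c X B. circ B (st c X) = st c (circ B X)"
    using cr unfolding module_hom_iff by blast+
  define F where "F X Y Z = (circ X (circ Y Z) - circ (circ X Y) Z) - (circ X (circ Z Y) - circ (circ X Z) Y)" for X Y Z
  have pure: "F (tp x r) (tp y s) (tp z t) = 0" for x y z r s t
  proof -
    let ?u = "m r (m s t)" and ?v = "m r (m t s)"
    have e: "F (tp x r) (tp y s) (tp z t) =
       (tp (br x (br y z)) ?u - tp (br (br x y) z) (?u + ?v)) - (tp (br x (br z y)) ?v - tp (br (br x z) y) (?v + ?u))"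
      unfolding F_def using assms(5) dual module_hom.add[OF mlin] by simp
    have a1: "tp (br x (br y z)) ?u - tp (br (br x y) z) ?u + tp (br (br x z) y) ?u = 0"
      using leib[of x y z] module_hom.add[OF tpl] module_hom.diff[OF tpl] module_hom.zero[OF tpl]
      by (metis)
    have a2: "tp (br x (br z y)) ?v - tp (br (br x z) y) ?v + tp (br (br x y) z) ?v = 0"
      using leib[of x z y] module_hom.add[OF tpl] module_hom.diff[OF tpl] module_hom.zero[OF tpl]
      by (metis)
    show ?thesis unfolding e module_hom.add[OF tpr] by (rule aux_ab[OF a1 a2])
  qed
  have hom1: "module_hom st st (\<lambda>X. F X Y Z)" for Y Z
    unfolding F_def module_hom_iff using mod
    by (simp add: addL scL module.scale_right_diff_distrib[OF mod] module.scale_right_distrib[OF mod] algebra_simps)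
  have hom2: "module_hom st st (\<lambda>Y. F X Y Z)" for X Z
    unfolding F_def module_hom_iff using mod
    by (simp add: addL scL addR scR module.scale_right_diff_distrib[OF mod] module.scale_right_distrib[OF mod] algebra_simps)
  have hom3: "module_hom st st (\<lambda>Z. F X Y Z)" for X Y
    unfolding F_def module_hom_iff using mod
    by (simp add: addL scL addR scR module.scale_right_diff_distrib[OF mod] module.scale_right_distrib[OF mod] algebra_simps)
  have s1: "F X (tp y s) (tp z t) = 0" for X y s z t
    by (rule kill_span[OF hom1 span]) (auto simp: pure)
  have s2: "F X Y (tp z t) = 0" for X Y z t
    by (rule kill_span[OF hom2 span]) (auto simp: s1)
  have s3: "F X Y Z = 0" for X Y Z
    by (rule kill_span[OF hom3 span]) (auto simp: s2)
  show ?thesis unfolding right_symmetric_def using s3 unfolding F_def by simp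
qed

end
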